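(* For every positive integer $\alpha$: there is no function $f$ such that $\mathrm{stcw}(G)\le f(\mathrm{ecrw}_\alpha(G))$ for all graphs $G$, and there is no function $f$ such that $\mathrm{tcw}(G)\le f(\mathrm{ecrw}_\alpha(G))$ for all graphs $G$.
   Context: A tree-cut decomposition of a graph $G$ is a pair $\mathcal{T}=(T,\{X_t\}_{t\in V(T)})$ where $T$ is a tree and the bags $X_t\subseteq V(G)$ are pairwise disjoint (possibly empty) with $\bigcup_{t\in V(T)}X_t=V(G)$. For a node $t$ of $T$, let $T_1,\dots,T_m$ be the connected components of $T-t$ and $Z_i=\bigcup_{s\in V(T_i)}X_s$; $\mathrm{cross}_{\mathcal{T}}(t)$ is the number of edges of $G$ whose two endpoints lie in two distinct sets among $Z_1,\dots,Z_m$ (if $T$ has one node, $\mathrm{cross}_{\mathcal T}(t)=0$). The crossing number of $\mathcal{T}$ is $\max_{t}\mathrm{cross}_{\mathcal{T}}(t)$, and the thickness of $\mathcal{T}$ is $\max_t|X_t|$. $\mathrm{ecrw}_\alpha(G)$ is the minimum crossing number over tree-cut decompositions of $G$ of thickness at most $\alpha$. For an edge $uv$ of $T$, the adhesion $\mathrm{adh}_{\mathcal T}(uv)$ is the set of edges of $G$ joining $\bigcup_{s\in V(T_{uv,u})}X_s$ and $\bigcup_{s\in V(T_{uv,v})}X_s$, where $T_{uv,u},T_{uv,v}$ are the components of $T-uv$ containing $u,v$. The torso $H_t$ at $t$ is $G$ if $|V(T)|=1$, and otherwise is obtained from $G$ by consolidating each $Z_i$ into a single vertex $z_i$ (replace $Z_i$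 by $z_i$ and, for each edge between $Z_i$ and $v\notin Z_i$, add an edge $z_iv$; multi-edges allowed). The 3-center $\widetilde{H_t}$ is obtained from $H_t$ by exhaustively suppressing vertices of $V(H_t)\setminus X_t$ of degree at most 2 (suppressing $v$: delete $v$, and if it had degree exactly 2 add an edge between its two neighbours). The 2-center $\widehat{H_t}$ is obtained from $H_t$ by removing the vertices of $V(H_t)\setminus X_t$ of degree 1 in $H_t$. The tree-cut width of $\mathcal T$ is $\max(\max_{uv\in E(T)}|\mathrm{adh}_{\mathcal T}(uv)|,\max_{t}|V(\widetilde{H_t})|)$ and the slim tree-cut width of $\mathcal T$ is $\max(\max_{uv\in E(T)}|\mathrm{adh}_{\mathcal T}(uv)|,\max_{t}|V(\widehat{H_t})|)$; $\mathrm{tcw}(G)$ and $\mathrm{stcw}(G)$ are the respective minima over all tree-cut decompositions of $G$. *)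

theory Defs
  imports Main "HOL-Library.Multiset"
begin

definition ugraph :: "nat set \<Rightarrow> nat set set \<Rightarrow> bool" where
  "ugraph V E \<longleftrightarrow> finite V \<and> (\<forall>e\<in>E. \<exists>u v. e = {u, v} \<and> u \<noteq> v \<and> u \<in> V \<and> v \<in> V)"

definition reach :: "nat set set \<Rightarrow> nat set \<Rightarrow> nat \<Rightarrow> nat \<Rightarrow> bool" where
  "reach F S a b \<longleftrightarrow> a \<in> S \<and> b \<in> S \<and>
     (a, b) \<in> {(x, y). {x, y} \<in> F \<and> x \<in> S \<and> y \<in> S}\<^sup>*"

definition is_tree :: "nat set \<Rightarrow> nat set set \<Rightarrow> bool" where
  "is_tree N F \<longleftrightarrow> finite N \<and> N \<noteq> {} \<and>
     (\<forall>e\<in>F. \<exists>a b. e = {a, b} \<and> a \<noteq> b \<and> a \<in> N \<and> b \<in> N) \<and>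
     (\<forall>a\<in>N. \<forall>b\<in>N. reach F N a b) \<and>
     (\<forall>e\<in>F. \<exists>a\<in>N. \<exists>b\<in>N. \<not> reach (F - {e}) N a b)"

text \<open>A decomposition is given by the tree (N, F) and the bag function X (relevant on N).\<close>
definition tcd :: "nat set \<Rightarrow> nat set set \<Rightarrow> nat set \<Rightarrow> nat set set \<Rightarrow> (nat \<Rightarrow> nat set) \<Rightarrow> bool" where
  "tcd V E N F X \<longleftrightarrow> is_tree N F \<and>
     (\<forall>s\<in>N. \<forall>t\<in>N. s \<noteq> t \<longrightarrow> X s \<inter> X t = {}) \<and> (\<Union>t\<in>N. X t) = V"

definition comps :: "nat set \<Rightarrow> nat set set \<Rightarrow> nat \<Rightarrow> nat set set" where
  "comps N F t = {{s. reach F (N - {t}) c s} | c. c \<in> N - {t}}"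

definition Zset :: "(nat \<Rightarrow> nat set) \<Rightarrow> nat set \<Rightarrow> nat set" where
  "Zset X C = (\<Union>s\<in>C. X s)"

definition cross :: "nat set set \<Rightarrow> nat set \<Rightarrow> nat set set \<Rightarrow> (nat \<Rightarrow> nat set) \<Rightarrow> nat \<Rightarrow> nat" where
  "cross E N F X t = card {e\<in>E. \<exists>C1\<in>comps N F t. \<exists>C2\<in>comps N F t. C1 \<noteq> C2 \<and>
       (\<exists>u v. e = {u, v} \<and> u \<in> Zset X C1 \<and> v \<in> Zset X C2)}"

definition crossing_number :: "nat set set \<Rightarrow> nat set \<Rightarrow> nat set set \<Rightarrow> (nat \<Rightarrow> nat set) \<Rightarrow> nat" where
  "crossing_number E N F X = Max ((\<lambda>t. cross E N F X t) ` N)"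

definition thickness :: "nat set \<Rightarrow> (nat \<Rightarrow> nat set) \<Rightarrow> nat" where
  "thickness N X = Max ((\<lambda>t. card (X t)) ` N)"

definition ecrw :: "nat \<Rightarrow> nat set \<Rightarrow> nat set set \<Rightarrow> nat" where
  "ecrw \<alpha> V E = (LEAST k. \<exists>N F X. tcd V E N F X \<and> thickness N X \<le> \<alpha> \<and>
                                   crossing_number E N F X \<le> k)"

definition side :: "nat set \<Rightarrow> nat set set \<Rightarrow> nat set \<Rightarrow> nat \<Rightarrow> nat set" where
  "side N F e u = {s. reach (F - {e}) N u s}"

definition adh :: "nat set set \<Rightarrow> nat set \<Rightarrow> nat set set \<Rightarrow> (nat \<Rightarrow> nat set) \<Rightarrow> nat set \<Rightarrow> nat set set" where
  "adh E N F X e = {g\<in>E. \<exists>u v a b. e = {u, v} \<and> g = {a, b} \<and>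
       a \<in> Zset X (side N F e u) \<and> b \<in> Zset X (side N F e v)}"

section \<open>Torsos (multigraphs with loops allowed; edges are 2-element multisets)\<close>

text \<open>Vertices of the torso at t: Inl v for v in X t, Inr C for the consolidated vertex z_C
  of a component C of T - t.\<close>
definition torso_V :: "nat set \<Rightarrow> nat set set \<Rightarrow> (nat \<Rightarrow> nat set) \<Rightarrow> nat \<Rightarrow> (nat + nat set) set" where
  "torso_V N F X t = Inl ` X t \<union> Inr ` comps N F t"

definition tproj :: "nat set \<Rightarrow> nat set set \<Rightarrow> (nat \<Rightarrow> nat set) \<Rightarrow> nat \<Rightarrow> nat \<Rightarrow> nat + nat set" where
  "tproj N F X t v = (if v \<in> X t then Inl v else Inr (THE C. C \<in> comps N F t \<and> v \<in> Zset X C))"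

text \<open>Each edge uv of G becomes the edge between the images of u and v; edges with both ends in
  the same consolidated set Z_i disappear.\<close>
definition torso_E :: "nat set set \<Rightarrow> nat set \<Rightarrow> nat set set \<Rightarrow> (nat \<Rightarrow> nat set) \<Rightarrow> nat \<Rightarrow> (nat + nat set) multiset multiset" where
  "torso_E E N F X t =
     image_mset (\<lambda>e. image_mset (tproj N F X t) (mset_set e))
       (filter_mset (\<lambda>e. card (tproj N F X t ` e) = 2) (mset_set E))"

definition mdeg :: "'v multiset multiset \<Rightarrow> 'v \<Rightarrow> nat" where
  "mdeg M x = sum_mset (image_mset (\<lambda>e. count e x) M)"

text \<open>One suppression step of a vertex x outside the protected set P of degree at most 2:
  delete x with its incident edges, and if x has degree exactly 2 (via two non-loop edges
  to neighbours a, b) add the edge ab.\<close>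
definition suppress_step :: "'v set \<Rightarrow> 'v set \<times> 'v multiset multiset \<Rightarrow> 'v set \<times> 'v multiset multiset \<Rightarrow> bool" where
  "suppress_step P H H' \<longleftrightarrow> (\<exists>x. x \<in> fst H \<and> x \<notin> P \<and> mdeg (snd H) x \<le> 2 \<and>
     (let inc = filter_mset (\<lambda>e. x \<in># e) (snd H);
          rest = filter_mset (\<lambda>e. x \<notin># e) (snd H)
      in H' = (fst H - {x},
               if mdeg (snd H) x = 2 \<and> {#x, x#} \<notin># inc
               then rest + {# sum_mset (image_mset (\<lambda>e. e - {#x#}) inc) #}
               else rest)))"

definition suppress_done :: "'v set \<Rightarrow> 'v set \<times> 'v multiset multiset \<Rightarrow> bool" where
  "suppress_done P H \<longleftrightarrow> (\<forall>x\<in>fst H. x \<notin> P \<longrightarrow> mdeg (snd H) x > 2)"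

text \<open>Number of vertices of the 3-center of the torso at t (maximum over all exhaustive
  suppression orders; the result is order-independent in the paper's setting).\<close>
definition center3_size :: "nat set set \<Rightarrow> nat set \<Rightarrow> nat set set \<Rightarrow> (nat \<Rightarrow> nat set) \<Rightarrow> nat \<Rightarrow> nat" where
  "center3_size E N F X t = Max {card (fst H') | H'.
      (suppress_step (Inl ` X t))\<^sup>*\<^sup>* (torso_V N F X t, torso_E E N F X t) H' \<and>
      suppress_done (Inl ` X t) H'}"

definition center2_size :: "nat set set \<Rightarrow> nat set \<Rightarrow> nat set set \<Rightarrow> (nat \<Rightarrow> nat set) \<Rightarrow> nat \<Rightarrow> nat" where
  "center2_size E N F X t = card (torso_V N F X t -
      {x. x \<notin> Inl ` X t \<and> mdeg (torso_E E N F X t) x = 1})"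

definition tcw_dec :: "nat set set \<Rightarrow> nat set \<Rightarrow> nat set set \<Rightarrow> (nat \<Rightarrow> nat set) \<Rightarrow> nat" where
  "tcw_dec E N F X = Max ((\<lambda>e. card (adh E N F X e)) ` F \<union> (\<lambda>t. center3_size E N F X t) ` N)"

definition stcw_dec :: "nat set set \<Rightarrow> nat set \<Rightarrow> nat set set \<Rightarrow> (nat \<Rightarrow> nat set) \<Rightarrow> nat" where
  "stcw_dec E N F X = Max ((\<lambda>e. card (adh E N F X e)) ` F \<union> (\<lambda>t. center2_size E N F X t) ` N)"

definition tcw :: "nat set \<Rightarrow> nat set set \<Rightarrow> nat" where
  "tcw V E = (LEAST k. \<exists>N F X. tcd V E N F X \<and> tcw_dec E N F X \<le> k)"

definition stcw :: "nat set \<Rightarrow> nat set set \<Rightarrow> nat" where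
  "stcw V E = (LEAST k. \<exists>N F X. tcd V E N F X \<and> stcw_dec E N F X \<le> k)"

end

theory Submission
  imports Defs
begin


lemma reach_sym: "reach F S a b \<Longrightarrow> reach F S b a"
proof -
  let ?R = "{(x, y). {x, y} \<in> F \<and> x \<in> S \<and> y \<in> S}"
  have c: "?R\<inverse> = ?R" by (auto simp: insert_commute)
  assume "reach F S a b"
  then have "a \<in> S" "b \<in> S" "(a,b) \<in> ?R\<^sup>*" by (auto simp: reach_def)
  then have "(b,a) \<in> (?R\<inverse>)\<^sup>*" by (simp add: rtrancl_converse)
  with c \<open>a \<in> S\<close> \<open>b \<in> S\<close> show ?thesis by (simp add: reach_def)
qed

lemma reach_trans: "reach F S a b \<Longrightarrow> reach F S b c \<Longrightarrow> reach F S a c"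
  unfolding reach_def by (meson rtrancl_trans)

lemma reach_refl: "a \<in> S \<Longrightarrow> reach F S a a"
  unfolding reach_def by simp

lemma reach_edge: "{a,b} \<in> F \<Longrightarrow> a \<in> S \<Longrightarrow> b \<in> S \<Longrightarrow> reach F S a b"
  unfolding reach_def by auto

lemma reach_mem: "reach F S a b \<Longrightarrow> a \<in> S \<and> b \<in> S"
  unfolding reach_def by simp

lemma comps_memD: "C \<in> comps N F t \<Longrightarrow> \<exists>c0\<in>N-{t}. C = {s. reach F (N-{t}) c0 s}"
  unfolding comps_def by auto

lemma comp_eq: "C \<in> comps N F t \<Longrightarrow> x \<in> C \<Longrightarrow> C = {s. reach F (N-{t}) x s}"
proof -
  assume C: "C \<in> comps N F t" and x: "x \<in> C"
  obtain c0 where c0: "C = {s. reach F (N-{t}) c0 s}" using comps_memD[OF C] by blast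
  have cx: "reach F (N-{t}) c0 x" using x c0 by blast
  show ?thesis
  proof (rule set_eqI, rule iffI)
    fix s assume "s \<in> C"
    then have "reach F (N-{t}) c0 s" using c0 by blast
    then show "s \<in> {s. reach F (N-{t}) x s}" using reach_trans[OF reach_sym[OF cx]] by blast
  next
    fix s assume "s \<in> {s. reach F (N-{t}) x s}"
    then have "reach F (N-{t}) x s" by blast
    then show "s \<in> C" using reach_trans[OF cx] c0 by blast
  qed
qed

lemma comp_sub: "C \<in> comps N F t \<Longrightarrow> C \<subseteq> N - {t}"
  using comps_memD[of C N F t] reach_mem by fastforce

lemma comp_of: "x \<in> N-{t} \<Longrightarrow> {s. reach F (N-{t}) x s} \<in> comps N F t \<and> x \<in> {s. reach F (N-{t}) x s}"
  unfolding comps_def using reach_refl by fastforce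

lemma comps_disj: "C1 \<in> comps N F t \<Longrightarrow> C2 \<in> comps N F t \<Longrightarrow> x \<in> C1 \<Longrightarrow> x \<in> C2 \<Longrightarrow> C1 = C2"
  using comp_eq by metis

lemma finite_comps: "finite N \<Longrightarrow> finite (comps N F t)"
proof -
  assume "finite N"
  have "comps N F t \<subseteq> Pow N" using comp_sub by blast
  then show ?thesis using \<open>finite N\<close> finite_subset by blast
qed

lemma mdeg0: "mdeg M x = 0 \<Longrightarrow> e \<in># M \<Longrightarrow> count e x = 0"
  unfolding mdeg_def by simp

lemma supp_inv:
  assumes "(suppress_step P)\<^sup>*\<^sup>* (V0, E0) H"
    and "P \<subseteq> S" "S \<subseteq> V0" "\<forall>x\<in>S-P. mdeg E0 x \<ge> 3" "\<forall>x\<in>V0-S. mdeg E0 x = 0"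
  shows "S \<subseteq> fst H \<and> fst H \<subseteq> V0 \<and> snd H = E0"
  using assms(1)
proof (induction rule: rtranclp_induct)
  case base then show ?case using assms by simp
next
  case (step H H')
  from step.hyps(2) obtain x where x: "x \<in> fst H" "x \<notin> P" "mdeg (snd H) x \<le> 2"
    and H': "H' = (fst H - {x},
               if mdeg (snd H) x = 2 \<and> {#x, x#} \<notin># filter_mset (\<lambda>e. x \<in># e) (snd H)
               then filter_mset (\<lambda>e. x \<notin># e) (snd H) + {# sum_mset (image_mset (\<lambda>e. e - {#x#}) (filter_mset (\<lambda>e. x \<in># e) (snd H))) #}
               else filter_mset (\<lambda>e. x \<notin># e) (snd H))"
    using step.hyps(2) unfolding suppress_step_def Let_def by blast
  have sE: "snd H = E0" using step.IH by simp
  have "x \<notin> S"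
  proof
    assume "x \<in> S"
    then have "3 \<le> mdeg E0 x" using x(2) assms(4) by blast
    then show False using x(3) sE by simp
  qed
  then have "x \<in> V0 - S" using x(1) step.IH by blast
  then have m0: "mdeg E0 x = 0" using assms(5) by blast
  have "filter_mset (\<lambda>e. x \<notin># e) E0 = E0"
    using mdeg0[OF m0] by (simp add: filter_mset_eq_conv count_eq_zero_iff)
  then have "H' = (fst H - {x}, E0)" using H' m0 sE by simp
  then show ?case using step.IH \<open>x \<notin> S\<close> by auto
qed

lemma supp_reach:
  assumes "finite D" "D \<inter> S = {}" "P \<subseteq> S" "\<forall>x\<in>D. mdeg E0 x = 0"
  shows "(suppress_step P)\<^sup>*\<^sup>* (S \<union> D, E0) (S, E0)"
  using assms
proof (induction D rule: finite_induct)
  case empty then show ?case by simp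
next
  case (insert d D)
  have m0: "mdeg E0 d = 0" using insert by simp
  have f1: "filter_mset (\<lambda>e. d \<notin># e) E0 = E0"
    using mdeg0[OF m0] by (simp add: filter_mset_eq_conv count_eq_zero_iff)
  have f2: "d \<notin> P" using insert by blast
  have f3: "(S \<union> insert d D) - {d} = S \<union> D" using insert by blast
  have "suppress_step P (S \<union> insert d D, E0) (S \<union> D, E0)"
    unfolding suppress_step_def Let_def
    apply (rule exI[of _ d])
    using m0 f1 f2 f3 by simp
  moreover have "(suppress_step P)\<^sup>*\<^sup>* (S \<union> D, E0) (S, E0)" using insert by blast
  ultimately show ?case by (meson converse_rtranclp_into_rtranclp)
qed

lemma supp_lower:
  fixes V0 :: "'v set"
  assumes "finite V0" "P \<subseteq> S" "S \<subseteq> V0" "\<forall>x\<in>S-P. mdeg E0 x \<ge> 3" "\<forall>x\<in>V0-S. mdeg E0 x = 0"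
  shows "card S \<le> Max {card (fst H') | H'. (suppress_step P)\<^sup>*\<^sup>* (V0, E0) H' \<and> suppress_done P H'}"
proof -
  let ?A = "{card (fst H') | H'. (suppress_step P)\<^sup>*\<^sup>* (V0, E0) H' \<and> suppress_done P H'}"
  have "?A \<subseteq> {..card V0}"
  proof
    fix k assume "k \<in> ?A"
    then obtain H' where "k = card (fst H')" "(suppress_step P)\<^sup>*\<^sup>* (V0, E0) H'" by blast
    then show "k \<in> {..card V0}" using supp_inv[OF _ assms(2-5)] assms(1) by (simp add: card_mono)
  qed
  then have fin: "finite ?A" using finite_subset by blast
  have "V0 = S \<union> (V0 - S)" using assms(3) by blast
  moreover have "(suppress_step P)\<^sup>*\<^sup>* (S \<union> (V0 - S), E0) (S, E0)"
    using supp_reach[of "V0 - S" S P E0] assms by blast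
  ultimately have r: "(suppress_step P)\<^sup>*\<^sup>* (V0, E0) (S, E0)" by simp
  have "suppress_done P (S, E0)" unfolding suppress_done_def
  proof (intro ballI impI)
    fix x assume "x \<in> fst (S, E0)" "x \<notin> P"
    then have "3 \<le> mdeg E0 x" using assms(4) by simp
    then show "2 < mdeg (snd (S, E0)) x" by simp
  qed
  with r have "card S \<in> ?A" by force
  then show ?thesis using fin by (simp add: Max_ge)
qed



context
  fixes V :: "nat set" and E N F and X :: "nat \<Rightarrow> nat set" and t
  assumes dec: "tcd V E N F X" and tN: "t \<in> N"
begin

lemma disjX: "s \<in> N \<Longrightarrow> s' \<in> N \<Longrightarrow> s \<noteq> s' \<Longrightarrow> X s \<inter> X s' = {}"
  using dec unfolding tcd_def by blast

lemma XsubV: "s \<in> N \<Longrightarrow> X s \<subseteq> V"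
  using dec unfolding tcd_def by blast

lemma Zset_sub: "C \<in> comps N F t \<Longrightarrow> Zset X C \<subseteq> V"
  using comp_sub XsubV unfolding Zset_def by blast

lemma Zset_Xt: "C \<in> comps N F t \<Longrightarrow> Zset X C \<inter> X t = {}"
  using comp_sub[of C N F t] disjX tN unfolding Zset_def by blast

lemma Zset_disj: "C1 \<in> comps N F t \<Longrightarrow> C2 \<in> comps N F t \<Longrightarrow> v \<in> Zset X C1 \<Longrightarrow> v \<in> Zset X C2 \<Longrightarrow> C1 = C2"
proof -
  assume a: "C1 \<in> comps N F t" "C2 \<in> comps N F t" "v \<in> Zset X C1" "v \<in> Zset X C2"
  then obtain s1 s2 where s: "s1 \<in> C1" "s2 \<in> C2" "v \<in> X s1" "v \<in> X s2" unfolding Zset_def by blast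
  have "s1 \<in> N" "s2 \<in> N" using s a comp_sub by blast+
  then have "s1 = s2" using disjX s by blast
  then show ?thesis using comps_disj a s by metis
qed

lemma V_cover: "V \<subseteq> X t \<union> (\<Union>C\<in>comps N F t. Zset X C)"
proof
  fix v assume "v \<in> V"
  then obtain s where s: "s \<in> N" "v \<in> X s" using dec unfolding tcd_def by blast
  show "v \<in> X t \<union> (\<Union>C\<in>comps N F t. Zset X C)"
  proof (cases "s = t")
    case True then show ?thesis using s by simp
  next
    case False
    then have "s \<in> N - {t}" using s by simp
    from comp_of[OF this, of F] s show ?thesis unfolding Zset_def by blast
  qed
qed

lemma tproj_Inl: "v \<in> X t \<Longrightarrow> tproj N F X t v = Inl v"
  unfolding tproj_def by simp

lemma tproj_Inr: "C \<in> comps N F t \<Longrightarrow> v \<in> Zset X C \<Longrightarrow> tproj N F X t v = Inr C"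
proof -
  assume a: "C \<in> comps N F t" "v \<in> Zset X C"
  then have "v \<notin> X t" using Zset_Xt by blast
  moreover have "(THE C'. C' \<in> comps N F t \<and> v \<in> Zset X C') = C"
  proof (rule the_equality)
    show "C \<in> comps N F t \<and> v \<in> Zset X C" using a by blast
  next
    fix C' assume "C' \<in> comps N F t \<and> v \<in> Zset X C'"
    then show "C' = C" using Zset_disj[of C' C v] a by blast
  qed
  ultimately show ?thesis unfolding tproj_def by simp
qed

lemma tproj_InrD: "v \<in> V \<Longrightarrow> tproj N F X t v = Inr C \<Longrightarrow> C \<in> comps N F t \<and> v \<in> Zset X C"
proof -
  assume a: "v \<in> V" "tproj N F X t v = Inr C"
  have "v \<notin> X t" using a tproj_Inl by fastforce
  then obtain C' where "C' \<in> comps N F t" "v \<in> Zset X C'" using V_cover a(1) by blast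
  then show ?thesis using tproj_Inr a(2) by auto
qed

end

lemma mdeg_torso:
  assumes "finite E"
  shows "mdeg (torso_E E N F X t) x =
    (\<Sum>e\<in>{e\<in>E. card (tproj N F X t ` e) = 2}. count (image_mset (tproj N F X t) (mset_set e)) x)"
  unfolding mdeg_def torso_E_def using assms
  by (simp add: multiset.map_comp o_def sum_unfold_sum_mset)

lemma mdeg_torso_ge:
  assumes "finite E" "\<forall>e\<in>E. finite e"
  shows "card {e\<in>E. card (tproj N F X t ` e) = 2 \<and> x \<in> tproj N F X t ` e} \<le> mdeg (torso_E E N F X t) x"
proof -
  let ?g = "tproj N F X t"
  let ?A = "{e\<in>E. card (?g ` e) = 2}"
  let ?B = "{e\<in>E. card (?g ` e) = 2 \<and> x \<in> ?g ` e}"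
  have fA: "finite ?A" using assms by simp
  have "card ?B = (\<Sum>e\<in>?B. 1)" by simp
  also have "\<dots> \<le> (\<Sum>e\<in>?B. count (image_mset ?g (mset_set e)) x)"
  proof (rule sum_mono)
    fix e assume "e \<in> ?B"
    then have "x \<in># image_mset ?g (mset_set e)" using assms by auto
    then show "1 \<le> count (image_mset ?g (mset_set e)) x" by (simp add: Suc_le_eq)
  qed
  also have "\<dots> \<le> (\<Sum>e\<in>?A. count (image_mset ?g (mset_set e)) x)"
    by (rule sum_mono2[OF fA]) auto
  finally show ?thesis using mdeg_torso[OF assms(1)] by simp
qed

lemma mdeg_torso_zero:
  assumes "finite E" "\<forall>e\<in>E. x \<notin> tproj N F X t ` e" "\<forall>e\<in>E. finite e"
  shows "mdeg (torso_E E N F X t) x = 0"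
  unfolding mdeg_torso[OF assms(1)] using assms by (auto intro!: sum.neutral simp: count_eq_zero_iff)



definition goodG :: "nat set \<Rightarrow> nat set set \<Rightarrow> bool" where
  "goodG V E \<longleftrightarrow> ugraph V E \<and> 0 \<in> V \<and> (\<forall>z\<in>V-{0}. {0,z}\<in>E) \<and>
    (\<forall>y\<in>V-{0}. \<exists>y' y''. y'\<in>V-{0} \<and> y''\<in>V-{0} \<and> y'\<noteq>y'' \<and> y'\<noteq>y \<and> y''\<noteq>y \<and> {y,y'}\<in>E \<and> {y,y''}\<in>E)"

lemma tree_neighbor:
  assumes tr: "is_tree N F" and tN: "t \<in> N" and C: "C \<in> comps N F t"
  shows "\<exists>s\<in>C. {t,s} \<in> F"
proof -
  obtain c0 where c0: "c0 \<in> N - {t}" "C = {s. reach F (N-{t}) c0 s}" using comps_memD[OF C] by blast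
  let ?RN = "{(x, y). {x, y} \<in> F \<and> x \<in> N \<and> y \<in> N}"
  let ?R = "{(x, y). {x, y} \<in> F \<and> x \<in> N-{t} \<and> y \<in> N-{t}}"
  have "reach F N c0 t" using tr tN c0 unfolding is_tree_def by blast
  then have p: "(c0, t) \<in> ?RN\<^sup>*" unfolding reach_def by blast
  have mem: "\<And>b. (c0, b) \<in> ?R\<^sup>* \<Longrightarrow> b = c0 \<or> b \<in> N - {t}"
  proof -
    fix b assume "(c0, b) \<in> ?R\<^sup>*"
    then show "b = c0 \<or> b \<in> N - {t}" by (induction rule: rtrancl_induct) auto
  qed
  have "\<And>y. (c0, y) \<in> ?RN\<^sup>* \<Longrightarrow> (c0, y) \<in> ?R\<^sup>* \<or> (\<exists>s. (c0, s) \<in> ?R\<^sup>* \<and> s \<in> N-{t} \<and> {s,t} \<in> F)"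
  proof -
    fix y assume "(c0, y) \<in> ?RN\<^sup>*"
    then show "(c0, y) \<in> ?R\<^sup>* \<or> (\<exists>s. (c0, s) \<in> ?R\<^sup>* \<and> s \<in> N-{t} \<and> {s,t} \<in> F)"
    proof (induction rule: rtrancl_induct)
      case base then show ?case by simp
    next
      case (step y z)
      show ?case
      proof (cases "(c0, y) \<in> ?R\<^sup>*")
        case True
        have yt: "y \<noteq> t" using mem[OF True] c0(1) by blast
        have yN: "y \<in> N" "z \<in> N" "{y,z} \<in> F" using step.hyps(2) by auto
        show ?thesis
        proof (cases "z = t")
          case True
          then show ?thesis using \<open>(c0, y) \<in> ?R\<^sup>*\<close> yt yN by blast
        next
          case False
          then have "(y, z) \<in> ?R" using yt yN by blast
          then show ?thesis using \<open>(c0, y) \<in> ?R\<^sup>*\<close> by (meson rtrancl.rtrancl_into_rtrancl)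
        qed
      next
        case False
        then show ?thesis using step.IH by blast
      qed
    qed
  qed
  from this[OF p] obtain s where s: "(c0, s) \<in> ?R\<^sup>*" "s \<in> N-{t}" "{s,t} \<in> F"
    using mem c0(1) by blast
  have "s \<in> C" using c0 s unfolding reach_def by blast
  moreover have "{t,s} \<in> F" using s(3) by (simp add: insert_commute)
  ultimately show ?thesis by blast
qed

lemma reach_mono_avoid:
  assumes "reach F (N-{t}) a b"
  shows "reach (F - {{t,s}}) N a b"
proof -
  let ?R1 = "{(x, y). {x, y} \<in> F \<and> x \<in> N-{t} \<and> y \<in> N-{t}}"
  let ?R2 = "{(x, y). {x, y} \<in> F - {{t,s}} \<and> x \<in> N \<and> y \<in> N}"
  have "?R1 \<subseteq> ?R2" by (auto simp: doubleton_eq_iff)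
  then show ?thesis using assms unfolding reach_def by (meson Diff_iff rtrancl_mono subsetD)
qed

context
  fixes V :: "nat set" and E N F and X :: "nat \<Rightarrow> nat set" and t
  assumes dec: "tcd V E N F X" and tN: "t \<in> N" and g: "goodG V E" and t0: "0 \<in> X t"
begin

lemma finE: "finite E" "\<forall>e\<in>E. finite e" "E \<subseteq> Pow V"
proof -
  have u: "ugraph V E" using g goodG_def by blast
  show "E \<subseteq> Pow V"
  proof
    fix e assume "e \<in> E"
    then obtain a b where "e = {a,b}" "a \<in> V" "b \<in> V" using u unfolding ugraph_def by blast
    then show "e \<in> Pow V" by simp
  qed
  then show "finite E" using u unfolding ugraph_def by (meson finite_Pow_iff finite_subset)
  show "\<forall>e\<in>E. finite e"
  proof
    fix e assume "e \<in> E"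
    then obtain a b where "e = {a,b}" using u unfolding ugraph_def by blast
    then show "finite e" by simp
  qed
qed

lemma z0_lem: "C \<in> comps N F t \<Longrightarrow> 0 \<notin> Zset X C"
proof
  assume C: "C \<in> comps N F t" and "0 \<in> Zset X C"
  then have "0 \<in> Zset X C \<inter> X t" using t0 by simp
  then show False using Zset_Xt[OF dec tN C] by simp
qed

lemma edge_cross:
  assumes C: "C \<in> comps N F t" and e: "{a,b} \<in> E" and a: "a \<in> Zset X C" and b: "b \<in> V" "b \<notin> Zset X C"
  shows "{a,b} \<in> {e\<in>E. card (tproj N F X t ` e) = 2 \<and> Inr C \<in> tproj N F X t ` e}"
proof -
  have ta: "tproj N F X t a = Inr C" using tproj_Inr[OF dec tN C a] .
  have tb: "tproj N F X t b \<noteq> Inr C" using tproj_InrD[OF dec tN b(1)] b(2) by blast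
  then show ?thesis using e ta by (simp add: card_insert_if)
qed

lemma deg3:
  assumes C: "C \<in> comps N F t" and ne: "Zset X C \<noteq> {}"
  shows "3 \<le> mdeg (torso_E E N F X t) (Inr C)"
proof -
  let ?D = "{e\<in>E. card (tproj N F X t ` e) = 2 \<and> Inr C \<in> tproj N F X t ` e}"
  obtain y where y: "y \<in> Zset X C" using ne by blast
  have yV: "y \<in> V" using Zset_sub[OF dec tN C] y by blast
  have z0: "0 \<notin> Zset X C" using z0_lem[OF C] .
  have y0: "y \<noteq> 0" using y z0 by metis
  have gg: "0 \<in> V" "\<forall>z\<in>V-{0}. {0,z}\<in>E" using g unfolding goodG_def by blast+
  have G2: "\<forall>y\<in>V-{0}. \<exists>y' y''. y'\<in>V-{0} \<and> y''\<in>V-{0} \<and> y'\<noteq>y'' \<and> y'\<noteq>y \<and> y''\<noteq>y \<and> {y,y'}\<in>E \<and> {y,y''}\<in>E"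
    using g unfolding goodG_def by blast
  have "y \<in> V-{0}" using yV y0 by blast
  from bspec[OF G2 this] obtain y' y'' where yy: "y'\<in>V-{0}" "y''\<in>V-{0}" "y'\<noteq>y''" "y'\<noteq>y" "y''\<noteq>y" "{y,y'}\<in>E" "{y,y''}\<in>E"
    by blast
  define ed where "ed z = (if z \<in> Zset X C then {0,z} else {y,z})" for z
  have e0: "{a,0} \<in> E" if "a \<in> V-{0}" for a
  proof -
    have "{0,a} \<in> E" using gg(2) that by blast
    then show ?thesis by (simp add: insert_commute)
  qed
  have e1: "{0,y} \<in> ?D"
  proof -
    have "{y,0} \<in> ?D" using edge_cross[OF C e0[OF \<open>y \<in> V-{0}\<close>] y gg(1) z0] .
    then show ?thesis by (simp only: insert_commute)
  qed
  have e2: "ed z \<in> ?D" if "z \<in> V-{0}" "{y,z} \<in> E" for z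
  proof (cases "z \<in> Zset X C")
    case True
    have "{z,0} \<in> ?D" using edge_cross[OF C e0[OF that(1)] True gg(1) z0] .
    moreover have "ed z = {z,0}" using True unfolding ed_def by (simp only: if_True insert_commute)
    ultimately show ?thesis by simp
  next
    case False
    have "{y,z} \<in> ?D" using edge_cross[OF C that(2) y _ False] that by blast
    moreover have "ed z = {y,z}" using False unfolding ed_def by simp
    ultimately show ?thesis by simp
  qed
  have n1: "{0,y} \<noteq> ed z" if "z \<in> V-{0}" "z \<noteq> y" for z
    using that y0 unfolding ed_def by (auto simp: doubleton_eq_iff)
  have n3: "ed y' \<noteq> ed y''"
    using yy y0 unfolding ed_def by (auto simp: doubleton_eq_iff)
  have d: "card {{0,y}, ed y', ed y''} = 3"
    using n1[OF yy(1,4)] n1[OF yy(2,5)] n3 by (simp add: card_insert_if)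
  have sub: "{{0,y}, ed y', ed y''} \<subseteq> ?D" using e1 e2[OF yy(1) yy(6)] e2[OF yy(2) yy(7)] by blast
  have fD: "finite ?D" by (rule finite_subset[OF _ finE(1)]) blast
  have "card {{0,y}, ed y', ed y''} \<le> card ?D" by (rule card_mono[OF fD sub])
  then have "3 \<le> card ?D" using d by simp
  also have "\<dots> \<le> mdeg (torso_E E N F X t) (Inr C)" by (rule mdeg_torso_ge[OF finE(1,2)])
  finally show ?thesis .
qed

lemma deg0:
  assumes C: "C \<in> comps N F t" and em: "Zset X C = {}"
  shows "mdeg (torso_E E N F X t) (Inr C) = 0"
proof -
  have "\<forall>e\<in>E. Inr C \<notin> tproj N F X t ` e"
  proof (intro ballI notI)
    fix e assume "e \<in> E" "Inr C \<in> tproj N F X t ` e"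
    then obtain v where v: "v \<in> e" "tproj N F X t v = Inr C" by auto
    have "v \<in> V" using finE(3) \<open>e \<in> E\<close> v by blast
    then show False using tproj_InrD[OF dec tN _ v(2)] em by blast
  qed
  then show ?thesis using mdeg_torso_zero[OF finE(1) _ finE(2)] by blast
qed

lemma adh_bound:
  assumes C: "C \<in> comps N F t" and ne: "Zset X C \<noteq> {}"
  shows "\<exists>e\<in>F. card (Zset X C) \<le> card (adh E N F X e)"
proof -
  have tr: "is_tree N F" using dec tcd_def by blast
  obtain s where s: "s \<in> C" "{t,s} \<in> F" using tree_neighbor[OF tr tN C] by blast
  let ?e = "{t,s}"
  have gg: "\<forall>z\<in>V-{0}. {0,z}\<in>E" using g unfolding goodG_def by blast
  have sub: "(\<lambda>y. {0,y}) ` Zset X C \<subseteq> adh E N F X ?e"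
  proof
    fix g0 assume "g0 \<in> (\<lambda>y. {0,y}) ` Zset X C"
    then obtain y where y: "y \<in> Zset X C" "g0 = {0,y}" by blast
    have yV: "y \<in> V" using Zset_sub[OF dec tN C] y by blast
    have y0: "y \<noteq> 0" using y z0_lem[OF C] by metis
    have "t \<in> side N F ?e t" unfolding side_def using reach_refl tN by fastforce
    then have a: "0 \<in> Zset X (side N F ?e t)" using t0 unfolding Zset_def by blast
    obtain s' where s': "s' \<in> C" "y \<in> X s'" using y unfolding Zset_def by blast
    have "reach F (N-{t}) s s'" using comp_eq[OF C s(1)] s'(1) by blast
    then have "s' \<in> side N F ?e s" unfolding side_def using reach_mono_avoid by blast
    then have b: "y \<in> Zset X (side N F ?e s)" using s' unfolding Zset_def by blast
    have "{0,y} \<in> E" using gg yV y0 by blast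
    then show "g0 \<in> adh E N F X ?e" unfolding adh_def using a b y(2) by blast
  qed
  have "adh E N F X ?e \<subseteq> E" unfolding adh_def by blast
  then have fin: "finite (adh E N F X ?e)" using finE(1) finite_subset by blast
  have inj: "inj_on (\<lambda>y. {0::nat,y}) (Zset X C)" by (auto simp: inj_on_def doubleton_eq_iff)
  have "card ((\<lambda>y. {0,y}) ` Zset X C) \<le> card (adh E N F X ?e)" by (rule card_mono[OF fin sub])
  then have "card (Zset X C) \<le> card (adh E N F X ?e)" using card_image[OF inj] by simp
  then show ?thesis using s by blast
qed

end



context
  fixes V :: "nat set" and E N F and X :: "nat \<Rightarrow> nat set" and t
  assumes dec: "tcd V E N F X" and tN: "t \<in> N" and g: "goodG V E" and t0: "0 \<in> X t"
begin

lemma finV: "finite V" using g unfolding goodG_def ugraph_def by blast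
lemma finN: "finite N" using dec unfolding tcd_def is_tree_def by blast
lemma finXt: "finite (X t)" by (rule finite_subset[OF XsubV[OF dec tN tN] finV])

definition "Cs = {C \<in> comps N F t. Zset X C \<noteq> {}}"

lemma finCs: "finite Cs" unfolding Cs_def using finite_comps[OF finN] by simp

lemma center_lower:
  "card (X t) + card Cs \<le> center2_size E N F X t \<and> card (X t) + card Cs \<le> center3_size E N F X t"
proof -
  let ?S = "Inl ` X t \<union> Inr ` Cs :: (nat + nat set) set"
  let ?P = "Inl ` X t :: (nat + nat set) set"
  let ?V0 = "torso_V N F X t"
  let ?E0 = "torso_E E N F X t"
  have cS: "card ?S = card (X t) + card Cs"
    using finXt finCs by (subst card_Un_disjoint) (auto simp: card_image)
  have fV0: "finite ?V0" unfolding torso_V_def using finXt finite_comps[OF finN] by simp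
  have PS: "?P \<subseteq> ?S" by blast
  have SV: "?S \<subseteq> ?V0" unfolding torso_V_def Cs_def by blast
  have d3: "\<forall>x\<in>?S-?P. mdeg ?E0 x \<ge> 3"
  proof
    fix x assume "x \<in> ?S-?P"
    then obtain C where "x = Inr C" "C \<in> Cs" by blast
    then show "mdeg ?E0 x \<ge> 3" using deg3[OF dec tN g t0, of C] unfolding Cs_def by simp
  qed
  have d0: "\<forall>x\<in>?V0-?S. mdeg ?E0 x = 0"
  proof
    fix x assume x: "x \<in> ?V0-?S"
    then obtain C where C: "x = Inr C" "C \<in> comps N F t" unfolding torso_V_def by blast
    then have "C \<notin> Cs" using x by blast
    then have "Zset X C = {}" using C unfolding Cs_def by simp
    then show "mdeg ?E0 x = 0" using deg0[OF dec tN g t0 C(2)] C(1) by simp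
  qed
  have "card ?S \<le> center3_size E N F X t"
    unfolding center3_size_def using supp_lower[OF fV0 PS SV d3 d0] .
  moreover have "card ?S \<le> center2_size E N F X t"
  proof -
    have "?S \<subseteq> ?V0 - {x. x \<notin> ?P \<and> mdeg ?E0 x = 1}"
    proof
      fix x assume x: "x \<in> ?S"
      have "\<not> (x \<notin> ?P \<and> mdeg ?E0 x = 1)"
      proof
        assume h: "x \<notin> ?P \<and> mdeg ?E0 x = 1"
        then have "mdeg ?E0 x \<ge> 3" using d3 x by blast
        then show False using h by simp
      qed
      then show "x \<in> ?V0 - {x. x \<notin> ?P \<and> mdeg ?E0 x = 1}" using SV x by blast
    qed
    then show ?thesis unfolding center2_size_def using fV0 by (simp add: card_mono)
  qed
  ultimately show ?thesis using cS by simp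
qed

lemma count_bound:
  assumes "\<forall>e\<in>F. card (adh E N F X e) \<le> w" "card (X t) + card Cs \<le> w"
  shows "card V \<le> w + w * w"
proof -
  have "V \<subseteq> X t \<union> (\<Union>C\<in>Cs. Zset X C)" using V_cover[OF dec tN] unfolding Cs_def by blast
  moreover have "X t \<union> (\<Union>C\<in>Cs. Zset X C) \<subseteq> V"
    using XsubV[OF dec tN tN] Zset_sub[OF dec tN] unfolding Cs_def by blast
  ultimately have "card V \<le> card (X t \<union> (\<Union>C\<in>Cs. Zset X C))"
    using finV by (meson card_mono finite_subset)
  also have "\<dots> \<le> card (X t) + card (\<Union>C\<in>Cs. Zset X C)" by (rule card_Un_le)
  also have "card (\<Union>C\<in>Cs. Zset X C) \<le> (\<Sum>C\<in>Cs. card (Zset X C))" using finCs by (rule card_UN_le)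
  also have "\<dots> \<le> card Cs * w"
  proof -
    have "\<And>C. C \<in> Cs \<Longrightarrow> card (Zset X C) \<le> w"
      using adh_bound[OF dec tN g t0] assms(1) unfolding Cs_def by fastforce
    then show ?thesis using sum_bounded_above[of Cs "\<lambda>C. card (Zset X C)" w] by simp
  qed
  also have "card Cs * w \<le> w * w"
  proof -
    have "card Cs \<le> w" using assms(2) by linarith
    then show ?thesis by (rule mult_le_mono1)
  qed
  finally have "card V \<le> card (X t) + w * w" by linarith
  moreover have "card (X t) \<le> w" using assms(2) by linarith
  ultimately show ?thesis by linarith
qed

end

lemma finF: "tcd V E N F X \<Longrightarrow> finite F"
proof -
  assume d: "tcd V E N F X"
  then have tr: "finite N" "\<forall>e\<in>F. \<exists>a b. e = {a, b} \<and> a \<noteq> b \<and> a \<in> N \<and> b \<in> N"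
    unfolding tcd_def is_tree_def by simp_all
  have "F \<subseteq> Pow N"
  proof
    fix e assume "e \<in> F"
    then obtain a b where "e = {a,b}" "a \<in> N" "b \<in> N" using tr(2) by blast
    then show "e \<in> Pow N" by simp
  qed
  then show "finite F" using tr(1) by (meson finite_Pow_iff finite_subset)
qed

lemma width_lower:
  assumes dec: "tcd V E N F X" and g: "goodG V E"
  shows "card V \<le> stcw_dec E N F X + stcw_dec E N F X * stcw_dec E N F X"
    "card V \<le> tcw_dec E N F X + tcw_dec E N F X * tcw_dec E N F X"
proof -
  have "0 \<in> V" using g unfolding goodG_def by blast
  then obtain t where tN: "t \<in> N" and t0: "0 \<in> X t" using dec unfolding tcd_def by blast
  have fN: "finite N" using finN[OF dec tN g t0] .
  have fF: "finite F" using finF[OF dec] .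
  have cl: "card (X t) + card (Cs N F X t) \<le> center2_size E N F X t"
    "card (X t) + card (Cs N F X t) \<le> center3_size E N F X t"
    using center_lower[OF dec tN g t0] by simp_all
  let ?w = "stcw_dec E N F X"
  have a1: "\<forall>e\<in>F. card (adh E N F X e) \<le> ?w" unfolding stcw_dec_def using fN fF by (simp add: Max_ge)
  have "center2_size E N F X t \<le> ?w" unfolding stcw_dec_def using fN fF tN by (simp add: Max_ge)
  then have a2: "card (X t) + card (Cs N F X t) \<le> ?w" using cl(1) by linarith
  show "card V \<le> ?w + ?w * ?w" by (rule count_bound[OF dec tN g t0 a1 a2])
  let ?v = "tcw_dec E N F X"
  have b1: "\<forall>e\<in>F. card (adh E N F X e) \<le> ?v" unfolding tcw_dec_def using fN fF by (simp add: Max_ge)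
  have "center3_size E N F X t \<le> ?v" unfolding tcw_dec_def using fN fF tN by (simp add: Max_ge)
  then have b2: "card (X t) + card (Cs N F X t) \<le> ?v" using cl(2) by linarith
  show "card V \<le> ?v + ?v * ?v" by (rule count_bound[OF dec tN g t0 b1 b2])
qed



definition GV :: "nat \<Rightarrow> nat set" where "GV n = {0..3*n}"
definition GE :: "nat \<Rightarrow> nat set set" where
  "GE n = {{0,v} | v. v \<in> {1..3*n}} \<union> {{3*i+1,3*i+2} | i. i<n} \<union> {{3*i+2,3*i+3} | i. i<n} \<union> {{3*i+1,3*i+3} | i. i<n}"
definition TF :: "nat \<Rightarrow> nat set set" where
  "TF n = {{0,3*i+1} | i. i<n} \<union> {{3*i+1,3*i+2} | i. i<n} \<union> {{3*i+2,3*i+3} | i. i<n}"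

lemma vdec: "(v::nat) \<in> {1..3*n} \<Longrightarrow> \<exists>i r. i < n \<and> r < 3 \<and> v = 3*i+r+1"
proof -
  assume a: "v \<in> {1..3*n}"
  define i where "i = (v-1) div 3"
  define r where "r = (v-1) mod 3"
  have "v = 3*i+r+1" using a unfolding i_def r_def by auto
  moreover have "r < 3" unfolding r_def by simp
  moreover have "i < n" using a unfolding i_def by auto
  ultimately show ?thesis by blast
qed

lemma closed_reach:
  assumes "reach F S a b" "a \<in> K" "\<And>x y. {x,y} \<in> F \<Longrightarrow> x \<in> K \<Longrightarrow> y \<in> S \<Longrightarrow> y \<in> K"
  shows "b \<in> K"
proof -
  have "(a,b) \<in> {(x, y). {x, y} \<in> F \<and> x \<in> S \<and> y \<in> S}\<^sup>*" using assms(1) unfolding reach_def by blast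
  then show ?thesis using assms(2,3) by (induction rule: rtrancl_induct) auto
qed

lemma tf_edges:
  "i < n \<Longrightarrow> {0,3*i+1} \<in> TF n" "i < n \<Longrightarrow> {3*i+1,3*i+2} \<in> TF n" "i < n \<Longrightarrow> {3*i+2,3*i+3} \<in> TF n"
  unfolding TF_def by blast+

lemma gv_mem: "i < n \<Longrightarrow> 0 \<in> GV n \<and> 3*i+1 \<in> GV n \<and> 3*i+2 \<in> GV n \<and> 3*i+3 \<in> GV n"
  unfolding GV_def by auto

lemma arith3: "3*i+k+1 = 3*j+m+1 \<Longrightarrow> k<3 \<Longrightarrow> m<3 \<Longrightarrow> i=j \<and> k=(m::nat)"
  by presburger

lemma TF_adj:
  assumes "{x,y} \<in> TF n" "x = 3*i+k+1" "k < 3"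
  shows "(k=0 \<and> (y = 0 \<or> y = 3*i+2)) \<or> (k=1 \<and> (y = 3*i+1 \<or> y=3*i+3)) \<or> (k=2 \<and> y = 3*i+2)"
proof -
  obtain j where j: "j < n" "{x,y} = {0,3*j+1} \<or> {x,y} = {3*j+1,3*j+2} \<or> {x,y} = {3*j+2,3*j+3}"
    using assms(1) unfolding TF_def by blast
  have x0: "x \<noteq> 0" using assms(2) by simp
  from j(2) show ?thesis
  proof (elim disjE)
    assume h: "{x,y} = {0,3*j+1}"
    then have "x = 3*j+0+1" "y = 0" using x0 by (auto simp: doubleton_eq_iff)
    then show ?thesis using arith3[of i k j 0] assms by simp
  next
    assume h: "{x,y} = {3*j+1,3*j+2}"
    then have "(x = 3*j+0+1 \<and> y = 3*j+2) \<or> (x = 3*j+1+1 \<and> y = 3*j+1)" by (auto simp: doubleton_eq_iff)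
    then show ?thesis
    proof (elim disjE conjE)
      assume "x = 3*j+0+1" "y = 3*j+2" then show ?thesis using arith3[of i k j 0] assms by simp
    next
      assume "x = 3*j+1+1" "y = 3*j+1" then show ?thesis using arith3[of i k j 1] assms by simp
    qed
  next
    assume h: "{x,y} = {3*j+2,3*j+3}"
    then have "(x = 3*j+1+1 \<and> y = 3*j+3) \<or> (x = 3*j+2+1 \<and> y = 3*j+2)" by (auto simp: doubleton_eq_iff)
    then show ?thesis
    proof (elim disjE conjE)
      assume "x = 3*j+1+1" "y = 3*j+3" then show ?thesis using arith3[of i k j 1] assms by simp
    next
      assume "x = 3*j+2+1" "y = 3*j+2" then show ?thesis using arith3[of i k j 2] assms by simp
    qed
  qed
qed

lemma is_tree_TF: "is_tree (GV n) (TF n)"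
  unfolding is_tree_def
proof (intro conjI ballI)
  show "finite (GV n)" "GV n \<noteq> {}" unfolding GV_def by auto
next
  fix e assume "e \<in> TF n"
  then obtain i where i: "i < n" and
    e: "e = {0,3*i+1} \<or> e = {3*i+1,3*i+2} \<or> e = {3*i+2,3*i+3}" unfolding TF_def by blast
  have m: "0 \<in> GV n" "3*i+1 \<in> GV n" "3*i+2 \<in> GV n" "3*i+3 \<in> GV n" using gv_mem[OF i] by auto
  from e show "\<exists>a b. e = {a, b} \<and> a \<noteq> b \<and> a \<in> GV n \<and> b \<in> GV n"
  proof (elim disjE)
    assume "e = {0,3*i+1}" then show ?thesis using m by (intro exI[of _ 0] exI[of _ "3*i+1"]) simp
  next
    assume "e = {3*i+1,3*i+2}" then show ?thesis using m by (intro exI[of _ "3*i+1"] exI[of _ "3*i+2"]) simp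
  next
    assume "e = {3*i+2,3*i+3}" then show ?thesis using m by (intro exI[of _ "3*i+2"] exI[of _ "3*i+3"]) simp
  qed
next
  have r0: "reach (TF n) (GV n) 0 v" if "v \<in> GV n" for v
  proof (cases "v = 0")
    case True then show ?thesis using reach_refl that by metis
  next
    case False
    then have "v \<in> {1..3*n}" using that unfolding GV_def by auto
    then obtain i r where ir: "i < n" "r < 3" "v = 3*i+r+1" using vdec by blast
    have a: "reach (TF n) (GV n) 0 (3*i+1)" using reach_edge[OF tf_edges(1)[OF ir(1)]] gv_mem[OF ir(1)] by simp
    have b: "reach (TF n) (GV n) (3*i+1) (3*i+2)" using reach_edge[OF tf_edges(2)[OF ir(1)]] gv_mem[OF ir(1)] by simp
    have c: "reach (TF n) (GV n) (3*i+2) (3*i+3)" using reach_edge[OF tf_edges(3)[OF ir(1)]] gv_mem[OF ir(1)] by simp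
    have "r = 0 \<or> r = 1 \<or> r = 2" using ir(2) by arith
    then show ?thesis
    proof (elim disjE)
      assume "r = 0" then have "v = 3*i+1" using ir(3) by simp
      then show ?thesis using a by simp
    next
      assume "r = 1" then have "v = 3*i+2" using ir(3) by simp
      then show ?thesis using reach_trans[OF a b] by simp
    next
      assume "r = 2" then have "v = 3*i+3" using ir(3) by simp
      then show ?thesis using reach_trans[OF reach_trans[OF a b] c] by simp
    qed
  qed
  fix a b assume "a \<in> GV n" "b \<in> GV n"
  then show "reach (TF n) (GV n) a b" using reach_trans[OF reach_sym[OF r0[of a]] r0[of b]] by blast
next
  fix e assume "e \<in> TF n"
  then obtain i where i: "i < n" and
    e: "e = {0,3*i+1} \<or> e = {3*i+1,3*i+2} \<or> e = {3*i+2,3*i+3}" unfolding TF_def by blast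
  show "\<exists>a\<in>GV n. \<exists>b\<in>GV n. \<not> reach (TF n - {e}) (GV n) a b"
  proof -
    { assume e1: "e = {0,3*i+1}"
      have "\<not> reach (TF n - {e}) (GV n) (3*i+1) 0"
      proof
        assume "reach (TF n - {e}) (GV n) (3*i+1) 0"
        then have "0 \<in> {3*i+1,3*i+2,3*i+3}"
        proof (rule closed_reach)
          fix x y assume xy: "{x,y} \<in> TF n - {e}" "x \<in> {3*i+1,3*i+2,3*i+3}"
          then have "x = 3*i+0+1 \<or> x = 3*i+1+1 \<or> x = 3*i+2+1" by auto
          then show "y \<in> {3*i+1,3*i+2,3*i+3}"
          proof (elim disjE)
            assume "x = 3*i+0+1" then show ?thesis using TF_adj[of x y n i 0] xy e1 by (auto simp: insert_commute)
          next
            assume "x = 3*i+1+1" then show ?thesis using TF_adj[of x y n i 1] xy by auto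
          next
            assume "x = 3*i+2+1" then show ?thesis using TF_adj[of x y n i 2] xy by auto
          qed
        qed simp
        then show False by simp
      qed
      then have ?thesis using gv_mem[OF i] by blast }
    moreover
    { assume e1: "e = {3*i+1,3*i+2}"
      have "\<not> reach (TF n - {e}) (GV n) (3*i+2) 0"
      proof
        assume "reach (TF n - {e}) (GV n) (3*i+2) 0"
        then have "0 \<in> {3*i+2,3*i+3}"
        proof (rule closed_reach)
          fix x y assume xy: "{x,y} \<in> TF n - {e}" "x \<in> {3*i+2,3*i+3}"
          then have "x = 3*i+1+1 \<or> x = 3*i+2+1" by auto
          then show "y \<in> {3*i+2,3*i+3}"
          proof (elim disjE)
            assume x: "x = 3*i+1+1"
            have "y \<noteq> 3*i+1" using xy e1 x by (auto simp: insert_commute)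
            then show ?thesis using TF_adj[of x y n i 1] xy x by auto
          next
            assume "x = 3*i+2+1" then show ?thesis using TF_adj[of x y n i 2] xy by auto
          qed
        qed simp
        then show False by simp
      qed
      then have ?thesis using gv_mem[OF i] by blast }
    moreover
    { assume e1: "e = {3*i+2,3*i+3}"
      have "\<not> reach (TF n - {e}) (GV n) (3*i+3) 0"
      proof
        assume "reach (TF n - {e}) (GV n) (3*i+3) 0"
        then have "0 \<in> {3*i+3}"
        proof (rule closed_reach)
          fix x y assume xy: "{x,y} \<in> TF n - {e}" "x \<in> {3*i+3}"
          then have x: "x = 3*i+2+1" by auto
          have "y \<noteq> 3*i+2" using xy e1 x by (auto simp: insert_commute)
          then show "y \<in> {3*i+3}" using TF_adj[of x y n i 2] xy x by auto
        qed simp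
        then show False by simp
      qed
      then have ?thesis using gv_mem[OF i] by blast }
    ultimately show ?thesis using e by blast
  qed
qed



lemma good_GE: "goodG (GV n) (GE n)"
  unfolding goodG_def
proof (intro conjI ballI)
  show "ugraph (GV n) (GE n)" unfolding ugraph_def
  proof (intro conjI ballI)
    show "finite (GV n)" unfolding GV_def by simp
  next
    fix e assume "e \<in> GE n"
    then consider (a) v where "v \<in> {1..3*n}" "e = {0,v}"
      | (b) i where "i < n" "e = {3*i+1,3*i+2}"
      | (c) i where "i < n" "e = {3*i+2,3*i+3}"
      | (d) i where "i < n" "e = {3*i+1,3*i+3}"
      unfolding GE_def by blast
    then show "\<exists>u v. e = {u, v} \<and> u \<noteq> v \<and> u \<in> GV n \<and> v \<in> GV n"
    proof cases
      case (a v) then show ?thesis unfolding GV_def by (intro exI[of _ 0] exI[of _ v]) auto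
    next
      case (b i) then show ?thesis using gv_mem[OF b(1)] by (intro exI[of _ "3*i+1"] exI[of _ "3*i+2"]) simp
    next
      case (c i) then show ?thesis using gv_mem[OF c(1)] by (intro exI[of _ "3*i+2"] exI[of _ "3*i+3"]) simp
    next
      case (d i) then show ?thesis using gv_mem[OF d(1)] by (intro exI[of _ "3*i+1"] exI[of _ "3*i+3"]) simp
    qed
  qed
  show "0 \<in> GV n" unfolding GV_def by simp
next
  fix z assume "z \<in> GV n - {0}"
  then show "{0,z} \<in> GE n" unfolding GV_def GE_def by auto
next
  fix y assume "y \<in> GV n - {0}"
  then have "y \<in> {1..3*n}" unfolding GV_def by auto
  then obtain i r where ir: "i < n" "r < 3" "y = 3*i+r+1" using vdec by blast
  have m: "3*i+1 \<in> GV n - {0}" "3*i+2 \<in> GV n - {0}" "3*i+3 \<in> GV n - {0}" using gv_mem[OF ir(1)] by auto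
  have ed: "{3*i+1,3*i+2} \<in> GE n" "{3*i+2,3*i+3} \<in> GE n" "{3*i+1,3*i+3} \<in> GE n"
    unfolding GE_def using ir(1) by blast+
  have "r = 0 \<or> r = 1 \<or> r = 2" using ir(2) by arith
  then show "\<exists>y' y''. y'\<in>GV n-{0} \<and> y''\<in>GV n-{0} \<and> y'\<noteq>y'' \<and> y'\<noteq>y \<and> y''\<noteq>y \<and> {y,y'}\<in>GE n \<and> {y,y''}\<in>GE n"
  proof (elim disjE)
    assume "r = 0"
    then have hy: "y = 3*i+1" using ir(3) by simp
    show ?thesis unfolding hy using m ed by (intro exI[of _ "3*i+2"] exI[of _ "3*i+3"]) simp
  next
    assume "r = 1"
    then have hy: "y = 3*i+2" using ir(3) by simp
    show ?thesis unfolding hy using m ed by (intro exI[of _ "3*i+1"] exI[of _ "3*i+3"]) (simp add: insert_commute)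
  next
    assume "r = 2"
    then have hy: "y = 3*i+3" using ir(3) by simp
    show ?thesis unfolding hy using m ed by (intro exI[of _ "3*i+1"] exI[of _ "3*i+2"]) (simp add: insert_commute)
  qed
qed

lemma card_GV: "card (GV n) = 3*n+1" unfolding GV_def by simp

lemma tcd_GV: "tcd (GV n) (GE n) (GV n) (TF n) (\<lambda>s. {s})"
  unfolding tcd_def using is_tree_TF by auto

lemma cross_le:
  assumes "finite E"
  shows "cross E N F (\<lambda>s. {s}) t \<le> card {e\<in>E. \<exists>u v. e = {u,v} \<and> u \<in> N-{t} \<and> v \<in> N-{t} \<and> \<not> reach F (N-{t}) u v}"
proof -
  have "{e\<in>E. \<exists>C1\<in>comps N F t. \<exists>C2\<in>comps N F t. C1 \<noteq> C2 \<and>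
       (\<exists>u v. e = {u, v} \<and> u \<in> Zset (\<lambda>s. {s}) C1 \<and> v \<in> Zset (\<lambda>s. {s}) C2)}
     \<subseteq> {e\<in>E. \<exists>u v. e = {u,v} \<and> u \<in> N-{t} \<and> v \<in> N-{t} \<and> \<not> reach F (N-{t}) u v}"
  proof (rule subsetI, elim CollectE conjE bexE exE, intro CollectI conjI exI)
    fix e C1 C2 u v
    assume h: "e \<in> E" "C1 \<in> comps N F t" "C2 \<in> comps N F t" "C1 \<noteq> C2" "e = {u, v}"
      "u \<in> Zset (\<lambda>s. {s}) C1" "v \<in> Zset (\<lambda>s. {s}) C2"
    have uv: "u \<in> C1" "v \<in> C2" using h(6,7) unfolding Zset_def by auto
    show "e \<in> E" "e = {u,v}" using h by auto
    show "u \<in> N-{t}" "v \<in> N-{t}" using uv comp_sub h(2,3) by blast+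
    show "\<not> reach F (N-{t}) u v"
    proof
      assume "reach F (N-{t}) u v"
      then have "v \<in> C1" using comp_eq[OF h(2) uv(1)] by blast
      then show False using comps_disj[OF h(2,3) _ uv(2)] h(4) by blast
    qed
  qed
  then show ?thesis unfolding cross_def using assms by (simp add: card_mono)
qed

definition bad :: "nat \<Rightarrow> nat set set" where
  "bad t = (if t = 0 then {} else if (t-1) mod 3 = 0 then {{0,t+1},{0,t+2}}
            else if (t-1) mod 3 = 1 then {{0,t+1},{t-1,t+1}} else {})"

lemma bad1: "bad (3*i+1) = {{0,3*i+2},{0,3*i+3}}"
proof -
  have e1: "3*i+1+1 = 3*i+(2::nat)" "3*i+1+2 = 3*i+(3::nat)" by arith+
  have "bad (3*i+1) = {{0,3*i+1+1},{0,3*i+1+2}}" unfolding bad_def by simp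
  then show ?thesis by (simp only: e1)
qed
lemma bad2: "bad (3*i+2) = {{0,3*i+3},{3*i+1,3*i+3}}"
proof -
  have m0: "(3*i+1) mod 3 = (1::nat)" by simp
  have m1: "3*i+2-1 = 3*i+(1::nat)" by simp
  have m: "(3*i+2-1) mod 3 = (1::nat)" unfolding m1 by (rule m0)
  have e1: "3*i+2+1 = 3*i+(3::nat)" "3*i+2-1 = 3*i+(1::nat)" by arith+
  have "bad (3*i+2) = {{0,3*i+2+1},{3*i+2-1,3*i+2+1}}" unfolding bad_def using m by simp
  then show ?thesis by (simp only: e1)
qed
lemma bad3: "bad (3*i+3) = {}"
proof -
  have m0: "(3*i+2) mod 3 = (2::nat)" by presburger
  have m1: "3*i+3-1 = 3*i+(2::nat)" by simp
  have "(3*i+3-1) mod 3 = (2::nat)" unfolding m1 by (rule m0)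
  then show ?thesis unfolding bad_def by simp
qed
lemma card_bad: "card (bad t) \<le> 2"
  unfolding bad_def by (auto simp: card_insert_if)

lemma key_reach:
  assumes e: "e \<in> GE n" and tn: "t \<notin> e" and nb: "e \<notin> bad t"
  shows "\<exists>a b. e = {a,b} \<and> reach (TF n) (GV n - {t}) a b"
proof -
  let ?S = "GV n - {t}"
  have r01: "reach (TF n) ?S 0 (3*i+1)" if "i < n" "t \<noteq> 0" "t \<noteq> 3*i+1" for i
    using reach_edge[OF tf_edges(1)[OF that(1)]] gv_mem[OF that(1)] that by simp
  have r12: "reach (TF n) ?S (3*i+1) (3*i+2)" if "i < n" "t \<noteq> 3*i+1" "t \<noteq> 3*i+2" for i
    using reach_edge[OF tf_edges(2)[OF that(1)]] gv_mem[OF that(1)] that by simp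
  have r23: "reach (TF n) ?S (3*i+2) (3*i+3)" if "i < n" "t \<noteq> 3*i+2" "t \<noteq> 3*i+3" for i
    using reach_edge[OF tf_edges(3)[OF that(1)]] gv_mem[OF that(1)] that by simp
  consider (a) v where "v \<in> {1..3*n}" "e = {0,v}"
    | (b) i where "i < n" "e = {3*i+1,3*i+2}"
    | (c) i where "i < n" "e = {3*i+2,3*i+3}"
    | (d) i where "i < n" "e = {3*i+1,3*i+3}"
    using e unfolding GE_def by blast
  then show ?thesis
  proof cases
    case (a v)
    obtain i r where ir: "i < n" "r < 3" "v = 3*i+r+1" using vdec a(1) by blast
    have t0: "t \<noteq> 0" "t \<noteq> v" using tn a by auto
    have rr: "r = 0 \<or> r = 1 \<or> r = 2" using ir(2) by arith
    have "reach (TF n) ?S 0 v"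
    proof (cases "t = 3*i+1 \<or> t = 3*i+2 \<or> t = 3*i+3")
      case False
      then have tt: "t \<noteq> 3*i+1" "t \<noteq> 3*i+2" "t \<noteq> 3*i+3" by simp_all
      have A: "reach (TF n) ?S 0 (3*i+1)" using r01[OF ir(1) t0(1) tt(1)] .
      have B: "reach (TF n) ?S (3*i+1) (3*i+2)" using r12[OF ir(1) tt(1) tt(2)] .
      have Cc: "reach (TF n) ?S (3*i+2) (3*i+3)" using r23[OF ir(1) tt(2) tt(3)] .
      from rr show ?thesis
      proof (elim disjE)
        assume "r = 0" then have "v = 3*i+1" using ir(3) by simp
        then show ?thesis using A by simp
      next
        assume "r = 1" then have "v = 3*i+2" using ir(3) by simp
        then show ?thesis using reach_trans[OF A B] by simp
      next
        assume "r = 2" then have "v = 3*i+3" using ir(3) by simp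
        then show ?thesis using reach_trans[OF reach_trans[OF A B] Cc] by simp
      qed
    next
      case True
      then consider "t = 3*i+1" | "t = 3*i+2" | "t = 3*i+3" by blast
      then show ?thesis
      proof cases
        case 1
        have hb: "bad t = {{0,3*i+2},{0,3*i+3}}" unfolding 1 by (rule bad1)
        have "v = 3*i+2 \<or> v = 3*i+3" using rr ir(3) t0 1 by auto
        then have "e \<in> bad t" unfolding hb a(2) by auto
        then show ?thesis using nb by blast
      next
        case 2
        have hb: "bad t = {{0,3*i+3},{3*i+1,3*i+3}}" unfolding 2 by (rule bad2)
        have "v = 3*i+1 \<or> v = 3*i+3" using rr ir(3) t0 2 by auto
        then show ?thesis
        proof (elim disjE)
          assume v: "v = 3*i+1"
          have "t \<noteq> 3*i+1" using 2 by simp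
          then show ?thesis using r01[OF ir(1) t0(1)] v by simp
        next
          assume "v = 3*i+3"
          then have "e \<in> bad t" unfolding hb a(2) by simp
          then show ?thesis using nb by blast
        qed
      next
        case 3
        have tt: "t \<noteq> 3*i+1" "t \<noteq> 3*i+2" using 3 by simp_all
        have A: "reach (TF n) ?S 0 (3*i+1)" using r01[OF ir(1) t0(1) tt(1)] .
        have B: "reach (TF n) ?S (3*i+1) (3*i+2)" using r12[OF ir(1) tt(1) tt(2)] .
        have "v = 3*i+1 \<or> v = 3*i+2" using rr ir(3) t0 3 by auto
        then show ?thesis
        proof (elim disjE)
          assume "v = 3*i+1" then show ?thesis using A by simp
        next
          assume "v = 3*i+2" then show ?thesis using reach_trans[OF A B] by simp
        qed
      qed
    qed
    then show ?thesis using a by blast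
  next
    case (b i)
    have "t \<noteq> 3*i+1" "t \<noteq> 3*i+2" using tn b(2) by auto
    then show ?thesis using r12[OF b(1)] b(2) by blast
  next
    case (c i)
    have "t \<noteq> 3*i+2" "t \<noteq> 3*i+3" using tn c(2) by auto
    then show ?thesis using r23[OF c(1)] c(2) by blast
  next
    case (d i)
    have t2: "t \<noteq> 3*i+2"
    proof
      assume h: "t = 3*i+2"
      have hb: "bad t = {{0,3*i+3},{3*i+1,3*i+3}}" unfolding h by (rule bad2)
      have "e \<in> bad t" unfolding hb d(2) by simp
      then show False using nb by blast
    qed
    have "t \<noteq> 3*i+1" "t \<noteq> 3*i+3" using tn d(2) by auto
    then have "reach (TF n) ?S (3*i+1) (3*i+3)"
      using reach_trans[OF r12[OF d(1)] r23[OF d(1)]] t2 by blast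
    then show ?thesis using d by blast
  qed
qed

lemma ugraph_finE: "ugraph V E \<Longrightarrow> finite E"
proof -
  assume u: "ugraph V E"
  have "E \<subseteq> Pow V"
  proof
    fix e assume "e \<in> E"
    then obtain a b where "e = {a,b}" "a \<in> V" "b \<in> V" using u unfolding ugraph_def by blast
    then show "e \<in> Pow V" by simp
  qed
  moreover have "finite V" using u unfolding ugraph_def by blast
  ultimately show "finite E" by (meson finite_Pow_iff finite_subset)
qed

lemma cross_GV: "t \<in> GV n \<Longrightarrow> cross (GE n) (GV n) (TF n) (\<lambda>s. {s}) t \<le> 2"
proof -
  assume tG: "t \<in> GV n"
  have fE: "finite (GE n)" using good_GE[of n] unfolding goodG_def by (intro ugraph_finE) blast
  let ?B = "{e\<in>GE n. \<exists>u v. e = {u,v} \<and> u \<in> GV n-{t} \<and> v \<in> GV n-{t} \<and> \<not> reach (TF n) (GV n-{t}) u v}"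
  have "?B \<subseteq> bad t"
  proof
    fix e assume "e \<in> ?B"
    then obtain u v where h: "e \<in> GE n" "e = {u,v}" "u \<in> GV n-{t}" "v \<in> GV n-{t}" "\<not> reach (TF n) (GV n-{t}) u v"
      by blast
    show "e \<in> bad t"
    proof (rule ccontr)
      assume "e \<notin> bad t"
      moreover have "t \<notin> e" using h by auto
      ultimately obtain a b where ab: "e = {a,b}" "reach (TF n) (GV n - {t}) a b" using key_reach h(1) by blast
      have "{u,v} = {a,b}" using ab h by simp
      then show False using ab(2) h(5) reach_sym by (metis doubleton_eq_iff)
    qed
  qed
  then have "card ?B \<le> card (bad t)" by (simp add: card_mono bad_def)
  then show ?thesis using cross_le[OF fE, of "GV n" "TF n" t] card_bad[of t] by linarith
qed

lemma ecrw_GV: "\<alpha> > 0 \<Longrightarrow> ecrw \<alpha> (GV n) (GE n) \<le> 2"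
proof -
  assume a: "\<alpha> > 0"
  have ne: "GV n \<noteq> {}" "finite (GV n)" unfolding GV_def by auto
  have "thickness (GV n) (\<lambda>s. {s}) = 1"
  proof -
    have "(\<lambda>t. card {t}) ` GV n = {1}" using ne by auto
    then show ?thesis unfolding thickness_def by simp
  qed
  moreover have "crossing_number (GE n) (GV n) (TF n) (\<lambda>s. {s}) \<le> 2"
    unfolding crossing_number_def using ne cross_GV by simp
  ultimately have "\<exists>N F X. tcd (GV n) (GE n) N F X \<and> thickness N X \<le> \<alpha> \<and> crossing_number (GE n) N F X \<le> 2"
    using tcd_GV a by fastforce
  then show ?thesis unfolding ecrw_def by (rule Least_le)
qed



lemma f_bound: "(k::nat) \<le> 2 \<Longrightarrow> f k \<le> f 0 + f 1 + (f 2 :: nat)"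
proof -
  assume "k \<le> 2"
  then have "k = 0 \<or> k = 1 \<or> k = 2" by arith
  then show ?thesis by auto
qed

lemma contra:
  assumes "w \<le> K" "card (GV (K*K+K)) \<le> w + w * w"
  shows False
proof -
  have "w * w \<le> K * K" by (rule mult_le_mono[OF assms(1) assms(1)])
  moreover have "card (GV (K*K+K)) = 3*(K*K) + 3*K + 1" using card_GV[of "K*K+K"] by simp
  ultimately show False using assms by linarith
qed

theorem lemma3p7:
  fixes \<alpha> :: nat
  assumes "\<alpha> > 0"
  shows "\<not> (\<exists>f :: nat \<Rightarrow> nat. \<forall>V E. ugraph V E \<longrightarrow> stcw V E \<le> f (ecrw \<alpha> V E)) \<and>
         \<not> (\<exists>f :: nat \<Rightarrow> nat. \<forall>V E. ugraph V E \<longrightarrow> tcw V E \<le> f (ecrw \<alpha> V E))"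
proof (intro conjI notI; elim exE)
  fix f :: "nat \<Rightarrow> nat"
  assume h: "\<forall>V E. ugraph V E \<longrightarrow> stcw V E \<le> f (ecrw \<alpha> V E)"
  define K where "K = f 0 + f 1 + f 2"
  define n where "n = K*K+K"
  have ug: "ugraph (GV n) (GE n)" using good_GE[of n] unfolding goodG_def by blast
  have s1: "stcw (GV n) (GE n) \<le> f (ecrw \<alpha> (GV n) (GE n))" using h ug by blast
  have s2: "f (ecrw \<alpha> (GV n) (GE n)) \<le> K" unfolding K_def by (rule f_bound[OF ecrw_GV[OF assms]])
  have ex: "\<exists>k N F X. tcd (GV n) (GE n) N F X \<and> stcw_dec (GE n) N F X \<le> k"
    using tcd_GV[of n] le_refl by blast
  have "\<exists>N F X. tcd (GV n) (GE n) N F X \<and> stcw_dec (GE n) N F X \<le> stcw (GV n) (GE n)"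
    unfolding stcw_def by (rule LeastI_ex[OF ex])
  then obtain N F X where d: "tcd (GV n) (GE n) N F X" "stcw_dec (GE n) N F X \<le> stcw (GV n) (GE n)" by blast
  have w: "stcw_dec (GE n) N F X \<le> K" using d(2) s1 s2 by linarith
  show False using contra[OF w] width_lower(1)[OF d(1) good_GE] unfolding n_def by blast
next
  fix f :: "nat \<Rightarrow> nat"
  assume h: "\<forall>V E. ugraph V E \<longrightarrow> tcw V E \<le> f (ecrw \<alpha> V E)"
  define K where "K = f 0 + f 1 + f 2"
  define n where "n = K*K+K"
  have ug: "ugraph (GV n) (GE n)" using good_GE[of n] unfolding goodG_def by blast
  have s1: "tcw (GV n) (GE n) \<le> f (ecrw \<alpha> (GV n) (GE n))" using h ug by blast
  have s2: "f (ecrw \<alpha> (GV n) (GE n)) \<le> K" unfolding K_def by (rule f_bound[OF ecrw_GV[OF assms]])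
  have ex: "\<exists>k N F X. tcd (GV n) (GE n) N F X \<and> tcw_dec (GE n) N F X \<le> k"
    using tcd_GV[of n] le_refl by blast
  have "\<exists>N F X. tcd (GV n) (GE n) N F X \<and> tcw_dec (GE n) N F X \<le> tcw (GV n) (GE n)"
    unfolding tcw_def by (rule LeastI_ex[OF ex])
  then obtain N F X where d: "tcd (GV n) (GE n) N F X" "tcw_dec (GE n) N F X \<le> tcw (GV n) (GE n)" by blast
  have w: "tcw_dec (GE n) N F X \<le> K" using d(2) s1 s2 by linarith
  show False using contra[OF w] width_lower(2)[OF d(1) good_GE] unfolding n_def by blast
qed


end
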